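(* Let $M=(V,\delta)$ be an $n$-point metric in which all pairwise distances are distinct, and let $r:V\to\mathbb{R}^+$ be a range assignment. Let $F$ be the minimum spanning forest of $S=SDG(M,r)$ and let $H$ be a minimum-weight Hamiltonian path of $M$. Then $w(F)\le \log_{5/4} n \cdot w(H)$.
   Context: A metric $M=(V,\delta)$ is viewed as the complete weighted graph on $V$ with edge weights $\delta(u,v)$. A range assignment is a map $r:V\to\mathbb{R}^+$. The symmetric disk graph $SDG(M,r)$ is the undirected spanning subgraph of this complete graph containing the edge $(u,v)$ (with weight $\delta(u,v)$) if and only if $r(u)\ge\delta(u,v)$ and $r(v)\ge\delta(u,v)$. The minimum spanning forest of a weighted graph is a spanning forest with the same connected components and minimum total weight. The weight of a graph is the sum of its edge weights. *)

theory Defs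
  imports Complex_Main
begin

definition finite_metric :: "'a set \<Rightarrow> ('a \<Rightarrow> 'a \<Rightarrow> real) \<Rightarrow> bool" where
  "finite_metric V d \<longleftrightarrow> finite V \<and>
     (\<forall>u\<in>V. \<forall>v\<in>V. d u v \<ge> 0 \<and> (d u v = 0 \<longleftrightarrow> u = v) \<and> d u v = d v u) \<and>
     (\<forall>u\<in>V. \<forall>v\<in>V. \<forall>x\<in>V. d u x \<le> d u v + d v x)"

definition distinct_distances :: "'a set \<Rightarrow> ('a \<Rightarrow> 'a \<Rightarrow> real) \<Rightarrow> bool" where
  "distinct_distances V d \<longleftrightarrow>
     (\<forall>u\<in>V. \<forall>v\<in>V. \<forall>x\<in>V. \<forall>y\<in>V. u \<noteq> v \<longrightarrow> x \<noteq> y \<longrightarrow> {u, v} \<noteq> {x, y} \<longrightarrow> d u v \<noteq> d x y)"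

definition edge_weight :: "('a \<Rightarrow> 'a \<Rightarrow> real) \<Rightarrow> 'a set \<Rightarrow> real" where
  "edge_weight d e = (THE w. \<exists>u v. e = {u, v} \<and> w = d u v)"

definition graph_weight :: "('a \<Rightarrow> 'a \<Rightarrow> real) \<Rightarrow> 'a set set \<Rightarrow> real" where
  "graph_weight d E = (\<Sum>e\<in>E. edge_weight d e)"

definition SDG :: "'a set \<Rightarrow> ('a \<Rightarrow> 'a \<Rightarrow> real) \<Rightarrow> ('a \<Rightarrow> real) \<Rightarrow> 'a set set" where
  "SDG V d r = {{u, v} | u v. u \<in> V \<and> v \<in> V \<and> u \<noteq> v \<and> r u \<ge> d u v \<and> r v \<ge> d u v}"

definition adj :: "'a set set \<Rightarrow> ('a \<times> 'a) set" where
  "adj E = {(x, y). {x, y} \<in> E \<and> x \<noteq> y}"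

definition connected_in :: "'a set set \<Rightarrow> 'a \<Rightarrow> 'a \<Rightarrow> bool" where
  "connected_in E x y \<longleftrightarrow> (x, y) \<in> (adj E)\<^sup>*"

definition is_cycle :: "'a set set \<Rightarrow> 'a list \<Rightarrow> bool" where
  "is_cycle E cs \<longleftrightarrow> length cs \<ge> 3 \<and> distinct cs \<and>
     (\<forall>i < length cs - 1. {cs ! i, cs ! (i + 1)} \<in> E) \<and> {last cs, hd cs} \<in> E"

definition forest :: "'a set set \<Rightarrow> bool" where
  "forest F \<longleftrightarrow> \<not> (\<exists>cs. is_cycle F cs)"

definition spanning_forest :: "'a set \<Rightarrow> 'a set set \<Rightarrow> 'a set set \<Rightarrow> bool" where
  "spanning_forest V E F \<longleftrightarrow> F \<subseteq> E \<and> forest F \<and>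
     (\<forall>x\<in>V. \<forall>y\<in>V. connected_in F x y \<longleftrightarrow> connected_in E x y)"

definition min_spanning_forest :: "'a set \<Rightarrow> ('a \<Rightarrow> 'a \<Rightarrow> real) \<Rightarrow> 'a set set \<Rightarrow> 'a set set \<Rightarrow> bool" where
  "min_spanning_forest V d E F \<longleftrightarrow> spanning_forest V E F \<and>
     (\<forall>F'. spanning_forest V E F' \<longrightarrow> graph_weight d F \<le> graph_weight d F')"

definition ham_path :: "'a set \<Rightarrow> 'a list \<Rightarrow> bool" where
  "ham_path V ps \<longleftrightarrow> distinct ps \<and> set ps = V"

definition path_weight :: "('a \<Rightarrow> 'a \<Rightarrow> real) \<Rightarrow> 'a list \<Rightarrow> real" where
  "path_weight d ps = sum_list (map (\<lambda>(a, b). d a b) (zip ps (tl ps)))"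

definition min_ham_path :: "'a set \<Rightarrow> ('a \<Rightarrow> 'a \<Rightarrow> real) \<Rightarrow> 'a list \<Rightarrow> bool" where
  "min_ham_path V d H \<longleftrightarrow> ham_path V H \<and>
     (\<forall>P. ham_path V P \<longrightarrow> path_weight d H \<le> path_weight d P)"

end

theory Submission
  imports Defs
begin



lemma log_step:
  fixes k :: real assumes k: "k \<ge> 1"
  shows "1 / k \<le> log (5/4) (k + 1) - log (5/4) k"
proof -
  have l1: "ln (5/4::real) \<le> 1/4" using ln_add_one_self_le_self[of "1/4::real"] by simp
  have l0: "ln (5/4::real) > 0" by simp
  have "ln (k / (k+1)) \<le> k/(k+1) - 1" using k by (intro ln_le_minus_one) auto
  also have "\<dots> = - 1/(k+1)" using k by (simp add: field_simps)
  finally have a: "ln (k/(k+1)) \<le> -1/(k+1)" .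
  have b: "ln (k/(k+1)) = ln k - ln (k+1)" using k by (simp add: ln_div)
  have c: "1/(k+1) \<le> ln (k+1) - ln k" using a b by linarith
  have d: "ln (5/4) / k \<le> 1/(4*k)" proof -
    have "ln (5/4) / k \<le> (1/4) / k" using l1 k by (intro divide_right_mono) auto
    thus ?thesis by simp
  qed
  have e: "1/(4*k) \<le> 1/(k+1)" using k by (simp add: field_simps)
  have "ln (5/4) * (1/k) \<le> ln (k+1) - ln k" using c d e by simp
  hence "1/k \<le> (ln (k+1) - ln k) / ln (5/4)" using l0 by (simp add: field_simps)
  thus ?thesis by (simp add: log_def diff_divide_distrib)
qed

lemma sum_bound:
  fixes f :: "'b \<Rightarrow> real"
  shows "\<And>A. finite A \<Longrightarrow> card A = n \<Longrightarrow> (\<forall>e\<in>A. f e > 0) \<Longrightarrow>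
    (\<forall>s>0. real (card {e\<in>A. s \<le> f e}) * s \<le> W) \<Longrightarrow> sum f A \<le> W * log (5/4) (real (card A) + 1)"
proof (induction n)
  case 0 thus ?case by simp
next
  case (Suc m)
  then have ne: "A \<noteq> {}" by auto
  define x where "x = (SOME x. x \<in> A \<and> f x = Min (f ` A))"
  have "Min (f ` A) \<in> f ` A" using Suc.prems ne by simp
  hence "\<exists>x. x \<in> A \<and> f x = Min (f ` A)" by auto
  hence xA: "x \<in> A" and fx: "f x = Min (f ` A)" unfolding x_def by (metis (mono_tags, lifting) someI_ex)+
  have le: "\<forall>e\<in>A. f x \<le> f e" using fx Suc.prems(1) by simp
  have "{e\<in>A. f x \<le> f e} = A" using le by auto
  hence W1: "real (Suc m) * f x \<le> W" using Suc.prems xA by (metis)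
  have fxp: "f x > 0" using Suc.prems xA by auto
  hence Wp: "W \<ge> 0" using W1 by (smt (verit) mult_pos_pos of_nat_0_less_iff zero_less_Suc)
  have fxW: "f x \<le> W * (1 / real (Suc m))" using W1 by (simp add: field_simps)
  have IH: "sum f (A - {x}) \<le> W * log (5/4) (real (card (A - {x})) + 1)"
  proof (rule Suc.IH)
    show "finite (A - {x})" using Suc.prems by simp
    show "card (A - {x}) = m" using Suc.prems xA by simp
    show "\<forall>e\<in>A - {x}. 0 < f e" using Suc.prems by simp
    show "\<forall>s>0. real (card {e \<in> A - {x}. s \<le> f e}) * s \<le> W"
    proof (intro allI impI)
      fix s :: real assume s: "s > 0"
      have "card {e \<in> A - {x}. s \<le> f e} \<le> card {e \<in> A. s \<le> f e}"
        using Suc.prems by (intro card_mono) auto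
      hence "real (card {e \<in> A - {x}. s \<le> f e}) * s \<le> real (card {e \<in> A. s \<le> f e}) * s"
        using s by (intro mult_right_mono) auto
      thus "real (card {e \<in> A - {x}. s \<le> f e}) * s \<le> W" using Suc.prems s by (meson order_trans)
    qed
  qed
  have cA: "card (A - {x}) = m" "card A = Suc m" using Suc.prems xA by auto
  have "sum f A = f x + sum f (A - {x})" using Suc.prems xA by (simp add: sum.remove)
  also have "\<dots> \<le> W * (1 / real (Suc m)) + W * log (5/4) (real m + 1)" using IH fxW cA by simp
  also have "\<dots> = W * (1 / real (Suc m) + log (5/4) (real m + 1))" by (simp add: algebra_simps)
  also have "\<dots> \<le> W * log (5/4) (real (Suc m) + 1)"
    using log_step[of "real (Suc m)"] Wp by (intro mult_left_mono) (auto simp: add.commute)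
  finally show ?case using cA by simp
qed




lemma adj_sym: "(x, y) \<in> adj E \<Longrightarrow> (y, x) \<in> adj E"
  unfolding adj_def by (auto simp: insert_commute)

lemma conn_refl: "connected_in E x x" unfolding connected_in_def by simp

lemma conn_sym: assumes "connected_in E x y" shows "connected_in E y x"
proof -
  have "(x, y) \<in> (adj E)\<^sup>*" using assms unfolding connected_in_def .
  hence "(y, x) \<in> (adj E)\<^sup>*"
  proof (induction rule: rtrancl_induct)
    case base thus ?case by simp
  next
    case (step y z) thus ?case by (meson adj_sym converse_rtrancl_into_rtrancl)
  qed
  thus ?thesis unfolding connected_in_def .
qed

lemma conn_trans: "connected_in E x y \<Longrightarrow> connected_in E y z \<Longrightarrow> connected_in E x z"
  unfolding connected_in_def by (rule rtrancl_trans)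

lemma conn_edge: "{x, y} \<in> E \<Longrightarrow> connected_in E x y"
proof (cases "x = y")
  case True thus ?thesis by (simp add: conn_refl)
next
  case False
  assume "{x, y} \<in> E"
  hence "(x, y) \<in> adj E" using False unfolding adj_def by simp
  thus ?thesis unfolding connected_in_def by (rule r_into_rtrancl)
qed

lemma conn_mono: "E \<subseteq> E' \<Longrightarrow> connected_in E x y \<Longrightarrow> connected_in E' x y"
proof -
  assume "E \<subseteq> E'" hence "adj E \<subseteq> adj E'" unfolding adj_def by auto
  thus "connected_in E x y \<Longrightarrow> connected_in E' x y" unfolding connected_in_def
    by (rule rtrancl_mono[THEN subsetD])
qed

lemma conn_subst:
  assumes "\<And>a b. {a, b} \<in> E \<Longrightarrow> connected_in E' a b" and "connected_in E x y"
  shows "connected_in E' x y"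
proof -
  have "(x, y) \<in> (adj E)\<^sup>*" using assms(2) unfolding connected_in_def .
  thus ?thesis
  proof (induction rule: rtrancl_induct)
    case base thus ?case by (rule conn_refl)
  next
    case (step y z)
    hence "{y, z} \<in> E" unfolding adj_def by auto
    thus ?case using conn_trans[OF step.IH assms(1)] by blast
  qed
qed

lemma conn_insert:
  assumes "connected_in (insert {u, v} G) x y"
  shows "connected_in G x y \<or> (connected_in G x u \<and> connected_in G v y) \<or>
         (connected_in G x v \<and> connected_in G u y)"
proof -
  have "(x, y) \<in> (adj (insert {u, v} G))\<^sup>*" using assms unfolding connected_in_def .
  thus ?thesis
  proof (induction rule: rtrancl_induct)
    case base thus ?case by (simp add: conn_refl)
  next
    case (step y z)
    hence e: "{y, z} = {u, v} \<or> {y, z} \<in> G" unfolding adj_def by auto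
    show ?case
    proof (cases "{y, z} \<in> G")
      case True
      hence yz: "connected_in G y z" by (rule conn_edge)
      from step.IH show ?thesis
      proof (elim disjE conjE)
        assume "connected_in G x y" thus ?thesis using conn_trans[OF _ yz] by blast
      next
        assume "connected_in G x u" "connected_in G v y" thus ?thesis using conn_trans[OF _ yz] by blast
      next
        assume "connected_in G x v" "connected_in G u y" thus ?thesis using conn_trans[OF _ yz] by blast
      qed
    next
      case False
      hence "(y = u \<and> z = v) \<or> (y = v \<and> z = u)" using e by (auto simp: doubleton_eq_iff)
      thus ?thesis
      proof (elim disjE conjE)
        assume yz: "y = u" "z = v"
        from step.IH show ?thesis
        proof (elim disjE conjE)
          assume "connected_in G x y" thus ?thesis using yz by (auto simp: conn_refl)
        next
          assume "connected_in G x u" thus ?thesis using yz by (auto simp: conn_refl)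
        next
          assume "connected_in G x v" "connected_in G u y" thus ?thesis using yz by blast
        qed
      next
        assume yz: "y = v" "z = u"
        from step.IH show ?thesis
        proof (elim disjE conjE)
          assume "connected_in G x y" thus ?thesis using yz by (auto simp: conn_refl)
        next
          assume "connected_in G x u" "connected_in G v y" thus ?thesis using yz by blast
        next
          assume "connected_in G x v" thus ?thesis using yz by (auto simp: conn_refl)
        qed
      qed
    qed
  qed
qed

lemma exists_reps:
  fixes G :: "'a set set"
  shows "finite X \<Longrightarrow> \<exists>R\<subseteq>X. (\<forall>a\<in>R. \<forall>b\<in>R. a \<noteq> b \<longrightarrow> \<not> connected_in G a b) \<and>
     (\<forall>x\<in>X. \<exists>a\<in>R. connected_in G x a) \<and> (X \<noteq> {} \<longrightarrow> R \<noteq> {})"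
proof (induction rule: finite_induct)
  case empty thus ?case by auto
next
  case (insert x X)
  then obtain R where R: "R \<subseteq> X" "\<forall>a\<in>R. \<forall>b\<in>R. a \<noteq> b \<longrightarrow> \<not> connected_in G a b"
    "\<forall>x\<in>X. \<exists>a\<in>R. connected_in G x a" by blast
  show ?case
  proof (cases "\<exists>a\<in>R. connected_in G x a")
    case True
    thus ?thesis using R by (rule_tac x=R in exI) auto
  next
    case False
    show ?thesis
    proof (rule exI[of _ "insert x R"], intro conjI ballI impI)
      show "insert x R \<subseteq> insert x X" using R by auto
      show "insert x R \<noteq> {}" by simp
    next
      fix a b assume ab: "a \<in> insert x R" "b \<in> insert x R" "a \<noteq> b"
      show "\<not> connected_in G a b"
      proof
        assume c: "connected_in G a b"
        show False
        proof (cases "a = x")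
          case True thus False using ab c False by auto
        next
          case ax: False
          show False
          proof (cases "b = x")
            case True thus False using ab ax conn_sym[OF c] False by auto
          next
            case False thus False using ab ax c R by auto
          qed
        qed
      qed
    next
      fix y assume "y \<in> insert x X"
      thus "\<exists>a\<in>insert x R. connected_in G y a" using R conn_refl by auto
    qed
  qed
qed

definition reps :: "'a set \<Rightarrow> 'a set set \<Rightarrow> 'a set \<Rightarrow> bool" where
  "reps T G R \<longleftrightarrow> R \<subseteq> T \<and> (\<forall>a\<in>R. \<forall>b\<in>R. a \<noteq> b \<longrightarrow> \<not> connected_in G a b) \<and>
     (\<forall>x\<in>T. \<exists>a\<in>R. connected_in G x a)"

lemma reps_remove:
  assumes "reps T (insert {u, v} G) R" "u \<in> T" "v \<in> T" "\<not> connected_in G u v" "finite R"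
  shows "\<exists>R1. reps T G R1 \<and> card R1 = card R + 1"
proof -
  let ?G = "insert {u, v} G"
  have RT: "R \<subseteq> T" and dis: "\<forall>a\<in>R. \<forall>b\<in>R. a \<noteq> b \<longrightarrow> \<not> connected_in ?G a b"
    and cov: "\<forall>x\<in>T. \<exists>a\<in>R. connected_in ?G x a" using assms(1) unfolding reps_def by auto
  have mono: "\<And>x y. connected_in G x y \<Longrightarrow> connected_in ?G x y" by (rule conn_mono) auto
  have uv: "connected_in ?G u v" by (rule conn_edge) simp
  obtain r where r: "r \<in> R" "connected_in ?G u r" using cov assms(2) by blast
  have "connected_in G u r \<or> connected_in G v r"
    using conn_insert[OF r(2)] assms(4) by blast
  then obtain p q where pq: "connected_in G p r" "\<not> connected_in G q r" "q \<in> T"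
    "connected_in ?G p q" "(p = u \<and> q = v) \<or> (p = v \<and> q = u)"
  proof (elim disjE)
    assume h: "connected_in G u r"
    have "\<not> connected_in G v r"
    proof
      assume "connected_in G v r"
      hence "connected_in G r v" by (rule conn_sym)
      hence "connected_in G u v" using conn_trans[OF h] by blast
      thus False using assms(4) by blast
    qed
    thus ?thesis using that[of u v] h uv assms(3) by blast
  next
    assume h: "connected_in G v r"
    have "\<not> connected_in G u r"
    proof
      assume "connected_in G u r"
      hence "connected_in G u v" using conn_trans[OF _ conn_sym[OF h]] by blast
      thus False using assms(4) by blast
    qed
    thus ?thesis using that[of v u] h conn_sym[OF uv] assms(2) by blast
  qed
  have qR: "q \<notin> R"
  proof
    assume "q \<in> R"
    moreover have "q \<noteq> r" using pq(2) conn_refl by metis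
    moreover have "connected_in ?G q r"
    proof -
      have "connected_in ?G q p" using pq(4) by (rule conn_sym)
      moreover have "connected_in ?G p r" using pq(1) mono by blast
      ultimately show ?thesis by (rule conn_trans)
    qed
    ultimately show False using dis r(1) by blast
  qed
  define R1 where "R1 = insert q R"
  have "reps T G R1"
    unfolding reps_def
  proof (intro conjI ballI impI)
    show "R1 \<subseteq> T" using RT pq(3) R1_def by auto
  next
    fix a b assume ab: "a \<in> R1" "b \<in> R1" "a \<noteq> b"
    show "\<not> connected_in G a b"
    proof
      assume c: "connected_in G a b"
      show False
      proof (cases "a = q \<or> b = q")
        case False
        hence "a \<in> R" "b \<in> R" using ab R1_def by auto
        thus False using dis ab(3) c mono by blast
      next
        case True
        have "\<exists>s\<in>R. connected_in G q s"
        proof (cases "a = q")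
          case True thus ?thesis using ab c R1_def by auto
        next
          case False
          hence "b = q" "a \<in> R" using True ab R1_def by auto
          thus ?thesis using conn_sym[OF c] by auto
        qed
        then obtain s where s: "s \<in> R" "connected_in G q s" by blast
        show False
        proof (cases "s = r")
          case True thus False using s pq(2) by simp
        next
          case False
          have s1: "connected_in ?G s q" using mono[OF conn_sym[OF s(2)]] .
          have s2: "connected_in ?G q p" using pq(4) by (rule conn_sym)
          have s3: "connected_in ?G p r" using pq(1) mono by blast
          have "connected_in ?G s r" using conn_trans[OF conn_trans[OF s1 s2] s3] .
          thus False using dis s(1) r(1) False by blast
        qed
      qed
    qed
  next
    fix x assume x: "x \<in> T"
    then obtain a where a: "a \<in> R" "connected_in ?G x a" using cov by blast
    from conn_insert[OF a(2)] show "\<exists>a\<in>R1. connected_in G x a"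
    proof (elim disjE conjE)
      assume "connected_in G x a" thus ?thesis using a R1_def by auto
    next
      assume h: "connected_in G x u" "connected_in G v a"
      from pq(5) show ?thesis
      proof (elim disjE conjE)
        assume "p = u" "q = v"
        hence "connected_in G x r" using conn_trans[of G x u r] conn_trans[of G x v r] h(1) pq(1) by auto
        thus ?thesis using r(1) R1_def by auto
      next
        assume "p = v" "q = u"
        thus ?thesis using h(1) R1_def by auto
      qed
    next
      assume h: "connected_in G x v" "connected_in G u a"
      from pq(5) show ?thesis
      proof (elim disjE conjE)
        assume "p = v" "q = u"
        hence "connected_in G x r" using conn_trans[of G x u r] conn_trans[of G x v r] h(1) pq(1) by auto
        thus ?thesis using r(1) R1_def by auto
      next
        assume "p = u" "q = v"
        thus ?thesis using h(1) R1_def by auto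
      qed
    qed
  qed
  moreover have "card R1 = card R + 1" using qR assms(5) R1_def by simp
  ultimately show ?thesis by blast
qed




locale L =
  fixes V :: "'a set" and d :: "'a \<Rightarrow> 'a \<Rightarrow> real" and r :: "'a \<Rightarrow> real"
  assumes fm: "finite_metric V d" and dd: "distinct_distances V d"
begin

lemma finV: "finite V" using fm unfolding finite_metric_def by blast
lemma dsym: "u \<in> V \<Longrightarrow> v \<in> V \<Longrightarrow> d u v = d v u" using fm unfolding finite_metric_def by blast
lemma dnn: "u \<in> V \<Longrightarrow> v \<in> V \<Longrightarrow> d u v \<ge> 0" using fm unfolding finite_metric_def by blast
lemma dpos: "u \<in> V \<Longrightarrow> v \<in> V \<Longrightarrow> u \<noteq> v \<Longrightarrow> d u v > 0"
  using fm unfolding finite_metric_def by (metis less_eq_real_def)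
lemma tri: "u \<in> V \<Longrightarrow> v \<in> V \<Longrightarrow> x \<in> V \<Longrightarrow> d u x \<le> d u v + d v x"
  using fm unfolding finite_metric_def by blast

abbreviation S where "S \<equiv> SDG V d r"
abbreviation w where "w \<equiv> edge_weight d"

lemma S_edge: "e \<in> S \<Longrightarrow> \<exists>u v. e = {u, v} \<and> u \<in> V \<and> v \<in> V \<and> u \<noteq> v \<and> d u v \<le> r u \<and> d u v \<le> r v"
  unfolding SDG_def by blast

lemma S_mem: "{u, v} \<in> S \<Longrightarrow> u \<noteq> v \<and> u \<in> V \<and> v \<in> V \<and> d u v \<le> r u \<and> d u v \<le> r v"
proof -
  assume "{u, v} \<in> S"
  then obtain a b where ab: "{u, v} = {a, b}" "a \<in> V" "b \<in> V" "a \<noteq> b" "d a b \<le> r a" "d a b \<le> r b"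
    using S_edge by blast
  from ab(1) have "(u = a \<and> v = b) \<or> (u = b \<and> v = a)" by (auto simp: doubleton_eq_iff)
  thus ?thesis using ab dsym by auto
qed

lemma finite_S: "finite S"
proof -
  have "S \<subseteq> (\<lambda>(u, v). {u, v}) ` (V \<times> V)" unfolding SDG_def by auto
  moreover have "finite ((\<lambda>(u, v). {u, v}) ` (V \<times> V))" using finV by simp
  ultimately show ?thesis by (rule finite_subset)
qed

lemma ew: assumes "u \<in> V" "v \<in> V" shows "w {u, v} = d u v"
  unfolding edge_weight_def
proof (rule the_equality)
  show "\<exists>a b. {u, v} = {a, b} \<and> d u v = d a b" by blast
next
  fix x assume "\<exists>a b. {u, v} = {a, b} \<and> x = d a b"
  then obtain a b where ab: "{u, v} = {a, b}" "x = d a b" by blast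
  from ab(1) have "(u = a \<and> v = b) \<or> (u = b \<and> v = a)" by (auto simp: doubleton_eq_iff)
  thus "x = d u v" using ab(2) dsym assms by auto
qed

lemma w_S: "{u, v} \<in> S \<Longrightarrow> w {u, v} = d u v" using S_mem ew by blast

lemma w_inj: assumes "e \<in> S" "f \<in> S" "e \<noteq> f" shows "w e \<noteq> w f"
proof -
  obtain a b where ab: "e = {a, b}" "a \<in> V" "b \<in> V" "a \<noteq> b" using S_edge assms(1) by blast
  obtain x y where xy: "f = {x, y}" "x \<in> V" "y \<in> V" "x \<noteq> y" using S_edge assms(2) by blast
  have "d a b \<noteq> d x y" using dd ab xy assms(3) unfolding distinct_distances_def by blast
  thus ?thesis using ab xy ew by simp
qed

lemma w_pos: "e \<in> S \<Longrightarrow> w e > 0"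
  using S_edge ew dpos by fastforce

definition K where
  "K = {e\<in>S. \<forall>u v. e = {u, v} \<longrightarrow> \<not> connected_in {f\<in>S. w f < w e} u v}"

lemma K_sub: "K \<subseteq> S" unfolding K_def by blast

lemma K_conn_aux:
  assumes "card {f\<in>S. w f < w e} = n" "e \<in> S" "e = {u, v}"
  shows "connected_in K u v"
  using assms
proof (induction n arbitrary: e u v rule: less_induct)
  case (less n e u v)
  note n = less.prems(1) and eS = less.prems(2) and e = less.prems(3)
  show "connected_in K u v"
  proof (cases "e \<in> K")
    case True
    hence "{u, v} \<in> K" unfolding e .
    thus ?thesis by (rule conn_edge)
  next
    case False
    have "\<not> (\<forall>u v. e = {u, v} \<longrightarrow> \<not> connected_in {f\<in>S. w f < w e} u v)"
      using False eS unfolding K_def by simp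
    hence "\<exists>a b. e = {a, b} \<and> connected_in {f\<in>S. w f < w e} a b"
      by blast
    then obtain a b where ab: "e = {a, b}" "connected_in {f\<in>S. w f < w e} a b"
      by (elim exE conjE) simp
    have "connected_in K a b"
    proof (rule conn_subst[OF _ ab(2)])
      fix x y assume xy: "{x, y} \<in> {f\<in>S. w f < w e}"
      have xyS: "{x, y} \<in> S" and lt: "w {x, y} < w e" using xy by simp_all
      have sub1: "{g\<in>S. w g < w {x, y}} \<subseteq> {f\<in>S. w f < w e}"
      proof
        fix g assume "g \<in> {g\<in>S. w g < w {x, y}}"
        thus "g \<in> {f\<in>S. w f < w e}" using lt by simp
      qed
      have nin: "{x, y} \<notin> {g\<in>S. w g < w {x, y}}" by blast
      have sub: "{g\<in>S. w g < w {x, y}} \<subset> {f\<in>S. w f < w e}"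
      proof (rule psubsetI[OF sub1])
        show "{g\<in>S. w g < w {x, y}} \<noteq> {f\<in>S. w f < w e}"
        proof
          assume "{g\<in>S. w g < w {x, y}} = {f\<in>S. w f < w e}"
          thus False using nin xy by blast
        qed
      qed
      have fin: "finite {f\<in>S. w f < w e}" using finite_S by simp
      have lt2: "card {g\<in>S. w g < w {x, y}} < n"
        using psubset_card_mono[OF fin sub] n by simp
      show "connected_in K x y" by (rule less.IH[OF lt2 refl xyS refl])
    qed
    from e ab(1) have "(u = a \<and> v = b) \<or> (u = b \<and> v = a)" by (auto simp: doubleton_eq_iff)
    thus ?thesis using \<open>connected_in K a b\<close> conn_sym[OF \<open>connected_in K a b\<close>] by (elim disjE) simp_all
  qed
qed

lemma K_conn: assumes "{u, v} \<in> S" shows "connected_in K u v"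
  by (rule K_conn_aux[OF refl assms refl])

lemma cycle_path:
  fixes cs :: "'a list" and E :: "'a set set"
  assumes "\<forall>t. i \<le> t \<and> t < k \<longrightarrow> {cs ! t, cs ! (t + 1)} \<in> E"
  shows "i \<le> k \<Longrightarrow> connected_in E (cs ! i) (cs ! k)"
  using assms
proof (induction k)
  case 0 thus ?case by (simp add: conn_refl)
next
  case (Suc k)
  show ?case
  proof (cases "i = Suc k")
    case True thus ?thesis by (simp add: conn_refl)
  next
    case False
    hence ik: "i \<le> k" using Suc.prems by simp
    have a: "connected_in E (cs ! i) (cs ! k)" using Suc.IH[OF ik] Suc.prems(2) by simp
    have "{cs ! k, cs ! (k + 1)} \<in> E" using Suc.prems(2) ik by simp
    hence b: "connected_in E (cs ! k) (cs ! Suc k)" using conn_edge by simp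
    show ?thesis using conn_trans[OF a b] .
  qed
qed

lemma K_forest: "forest K"
  unfolding forest_def
proof
  assume "\<exists>cs. is_cycle K cs"
  then obtain cs where cyc: "is_cycle K cs" by blast
  define m where "m = length cs"
  have m3: "m \<ge> 3" and dis: "distinct cs" and PK: "\<forall>i < m - 1. {cs ! i, cs ! (i + 1)} \<in> K"
    and ZK: "{last cs, hd cs} \<in> K" using cyc unfolding is_cycle_def m_def by auto
  have ne: "cs \<noteq> []" using m3 m_def by auto
  have hd0: "hd cs = cs ! 0" using ne by (simp add: hd_conv_nth)
  have lastm: "last cs = cs ! (m - 1)" using ne m_def by (simp add: last_conv_nth)
  define P where "P = (\<lambda>j. {cs ! j, cs ! (j + 1)})"
  define Z where "Z = {cs ! (m - 1), cs ! 0}"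
  define CE where "CE = P ` {..<m - 1} \<union> {Z}"
  have CEK: "CE \<subseteq> K" using PK ZK hd0 lastm unfolding CE_def P_def Z_def by auto
  have CES: "CE \<subseteq> S" using CEK K_sub by blast
  have finCE: "finite CE" unfolding CE_def by simp
  have idx: "\<And>i j. i < m \<Longrightarrow> j < m \<Longrightarrow> cs ! i = cs ! j \<longleftrightarrow> i = j"
    using dis m_def nth_eq_iff_index_eq by blast
  have PP: "\<And>t j. t < m - 1 \<Longrightarrow> j < m - 1 \<Longrightarrow> t \<noteq> j \<Longrightarrow> P t \<noteq> P j"
  proof
    fix t j assume tj: "t < m - 1" "j < m - 1" "t \<noteq> j" "P t = P j"
    hence "(cs ! t = cs ! j \<and> cs ! (t+1) = cs ! (j+1)) \<or> (cs ! t = cs ! (j+1) \<and> cs ! (t+1) = cs ! j)"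
      unfolding P_def by (simp add: doubleton_eq_iff)
    thus False using idx tj by (elim disjE) (simp_all add: idx)
  qed
  have PZ: "\<And>j. j < m - 1 \<Longrightarrow> P j \<noteq> Z"
  proof
    fix j assume j: "j < m - 1" "P j = Z"
    hence "(cs ! j = cs ! (m-1) \<and> cs ! (j+1) = cs ! 0) \<or> (cs ! j = cs ! 0 \<and> cs ! (j+1) = cs ! (m-1))"
      unfolding P_def Z_def by (simp add: doubleton_eq_iff)
    thus False using idx j m3 by (elim disjE) (auto simp: idx)
  qed
  have ZP: "\<And>j. j < m - 1 \<Longrightarrow> Z \<noteq> P j" using PZ by metis
  obtain e where eCE: "e \<in> CE" and emax: "\<forall>f\<in>CE. w f \<le> w e"
  proof -
    have "Max (w ` CE) \<in> w ` CE" using finCE unfolding CE_def by (intro Max_in) auto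
    then obtain e where "e \<in> CE" "w e = Max (w ` CE)" by (metis imageE)
    moreover have "\<forall>f\<in>CE. w f \<le> Max (w ` CE)" using finCE by simp
    ultimately show ?thesis using that by simp
  qed
  have lt: "CE - {e} \<subseteq> {f\<in>S. w f < w e}"
  proof
    fix f assume f: "f \<in> CE - {e}"
    have "w f \<noteq> w e" using w_inj CES f eCE by blast
    moreover have "w f \<le> w e" using emax f by blast
    ultimately show "f \<in> {f\<in>S. w f < w e}" using f CES by auto
  qed
  have path: "\<And>i k. i \<le> k \<Longrightarrow> k < m \<Longrightarrow> connected_in (P ` {i..<k}) (cs ! i) (cs ! k)"
  proof -
    fix i k :: nat assume ik: "i \<le> k" "k < m"
    show "connected_in (P ` {i..<k}) (cs ! i) (cs ! k)"
      by (rule cycle_path[OF _ ik(1)]) (auto simp: P_def)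
  qed
  have "\<exists>a b. e = {a, b} \<and> connected_in (CE - {e}) a b"
  proof (cases "e = Z")
    case True
    have c0: "connected_in (P ` {0..<m-1}) (cs ! 0) (cs ! (m-1))" using path m3 by simp
    have "\<forall>x\<in>{0..<m-1}. P x \<in> CE \<and> P x \<noteq> e" using True PZ unfolding CE_def by simp
    hence sub: "P ` {0..<m-1} \<subseteq> CE - {e}" by blast
    have "connected_in (CE - {e}) (cs ! 0) (cs ! (m-1))" using conn_mono[OF sub c0] .
    hence "connected_in (CE - {e}) (cs ! (m-1)) (cs ! 0)" by (rule conn_sym)
    moreover have "e = {cs ! (m-1), cs ! 0}" using True Z_def by simp
    ultimately show ?thesis by blast
  next
    case False
    then obtain j where j: "j < m - 1" "e = P j" using eCE unfolding CE_def by auto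
    have s1: "P ` {j+1..<m-1} \<subseteq> CE - {e}" using j PP unfolding CE_def by auto
    have s2: "P ` {0..<j} \<subseteq> CE - {e}" using j PP unfolding CE_def by auto
    have s3: "Z \<in> CE - {e}" using j PZ unfolding CE_def by auto
    have c1: "connected_in (CE - {e}) (cs ! (j+1)) (cs ! (m-1))"
      using conn_mono[OF s1 path[of "j+1" "m-1"]] j m3 by simp
    have c2: "connected_in (CE - {e}) (cs ! (m-1)) (cs ! 0)"
      using conn_edge[of "cs ! (m-1)" "cs ! 0" "CE - {e}"] s3 Z_def by simp
    have c3: "connected_in (CE - {e}) (cs ! 0) (cs ! j)"
      using conn_mono[OF s2 path[of 0 j]] j m3 by simp
    have "connected_in (CE - {e}) (cs ! (j+1)) (cs ! j)"
      using conn_trans[OF conn_trans[OF c1 c2] c3] .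
    hence "connected_in (CE - {e}) (cs ! j) (cs ! (j+1))" by (rule conn_sym)
    moreover have "e = {cs ! j, cs ! (j+1)}" using j P_def by simp
    ultimately show ?thesis by blast
  qed
  then obtain a b where ab: "e = {a, b}" "connected_in (CE - {e}) a b" by blast
  have "connected_in {f\<in>S. w f < w e} a b" using conn_mono[OF lt ab(2)] .
  moreover have "e \<in> K" using eCE CEK by blast
  ultimately show False using ab(1) unfolding K_def by blast
qed

lemma K_spanning: "spanning_forest V S K"
  unfolding spanning_forest_def
proof (intro conjI ballI)
  show "K \<subseteq> S" by (rule K_sub)
  show "forest K" by (rule K_forest)
next
  fix x y assume "x \<in> V" "y \<in> V"
  show "connected_in K x y = connected_in S x y"
  proof
    assume "connected_in K x y" thus "connected_in S x y" using conn_mono[OF K_sub] by blast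
  next
    assume "connected_in S x y" thus "connected_in K x y" using conn_subst[OF K_conn] by blast
  qed
qed

end



lemma card_minus_real: assumes "finite R" "b \<in> R" shows "real (card (R - {b})) = real (card R) - 1"
proof -
  have "card R > 0" using assms card_gt_0_iff by blast
  thus ?thesis using assms by (simp add: of_nat_diff)
qed

context L begin

lemma pw_cons2: "path_weight d (b # c # qs) = d b c + path_weight d (c # qs)"
  by (simp add: path_weight_def)
lemma pw_single: "path_weight d [b] = 0" by (simp add: path_weight_def)
lemma pw_nil: "path_weight d [] = 0" by (simp add: path_weight_def)

lemma pw_cons: "qs \<noteq> [] \<Longrightarrow> path_weight d (b # qs) = d b (hd qs) + path_weight d qs"
  by (cases qs) (simp_all add: pw_cons2)

lemma pw_nn: "set ps \<subseteq> V \<Longrightarrow> path_weight d ps \<ge> 0"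
proof (induction ps)
  case Nil thus ?case by (simp add: pw_nil)
next
  case (Cons b qs)
  show ?case
  proof (cases "qs = []")
    case True thus ?thesis by (simp add: pw_single)
  next
    case False
    hence "hd qs \<in> V" using Cons.prems by (cases qs) auto
    hence "d b (hd qs) \<ge> 0" using Cons.prems dnn by simp
    thus ?thesis using Cons pw_cons[OF False] by simp
  qed
qed

definition sep :: "real \<Rightarrow> 'a set \<Rightarrow> bool" where
  "sep t R \<longleftrightarrow> (\<forall>x\<in>R. \<forall>y\<in>R. x \<noteq> y \<longrightarrow> t \<le> d x y)"

lemma L1: "set ps \<subseteq> V \<Longrightarrow> ps \<noteq> [] \<Longrightarrow> a \<in> V \<Longrightarrow> a \<notin> R \<Longrightarrow> R \<subseteq> set ps \<Longrightarrow> sep t (insert a R)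
  \<Longrightarrow> real (card R) * t \<le> d a (hd ps) + path_weight d ps"
proof (induction ps arbitrary: a R)
  case Nil thus ?case by simp
next
  case (Cons b qs)
  have bV: "b \<in> V" using Cons.prems by simp
  have finR: "finite R" using Cons.prems(5) finite_subset by blast
  show ?case
  proof (cases "qs = []")
    case True
    hence Rb: "R \<subseteq> {b}" using Cons.prems by simp
    show ?thesis
    proof (cases "b \<in> R")
      case True
      hence "R = {b}" using Rb by blast
      moreover have "t \<le> d a b" using Cons.prems(4,6) True unfolding sep_def by auto
      ultimately show ?thesis using \<open>qs = []\<close> by (simp add: pw_single)
    next
      case False
      hence "R = {}" using Rb by blast
      thus ?thesis using \<open>qs = []\<close> dnn Cons.prems(3) bV by (simp add: pw_single)
    qed
  next
    case False
    then obtain c qs' where qs: "qs = c # qs'" by (cases qs) auto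
    have cV: "c \<in> V" using Cons.prems qs by simp
    have pw: "path_weight d (b # qs) = d b c + path_weight d qs" using qs pw_cons2 by simp
    show ?thesis
    proof (cases "b \<in> R")
      case True
      have IH: "real (card (R - {b})) * t \<le> d b (hd qs) + path_weight d qs"
      proof (rule Cons.IH)
        show "set qs \<subseteq> V" "qs \<noteq> []" "b \<in> V" "b \<notin> R - {b}" using Cons.prems False bV by auto
        show "R - {b} \<subseteq> set qs" using Cons.prems(5) by auto
        show "sep t (insert b (R - {b}))" using Cons.prems(6) True unfolding sep_def by auto
      qed
      have ab: "t \<le> d a b" using Cons.prems(4,6) True unfolding sep_def by auto
      have "real (card (R - {b})) = real (card R) - 1" using card_minus_real[OF finR True] .
      hence "real (card R) * t = real (card (R - {b})) * t + t" by (simp add: ring_distribs)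
      thus ?thesis using IH ab pw qs by simp
    next
      case bR: False
      have IH: "real (card R) * t \<le> d a (hd qs) + path_weight d qs"
      proof (rule Cons.IH)
        show "set qs \<subseteq> V" "qs \<noteq> []" "a \<in> V" "a \<notin> R" using Cons.prems False by auto
        show "R \<subseteq> set qs" using Cons.prems(5) bR by auto
        show "sep t (insert a R)" using Cons.prems(6) .
      qed
      have "d a c \<le> d a b + d b c" using tri Cons.prems(3) bV cV by blast
      thus ?thesis using IH pw qs by simp
    qed
  qed
qed

lemma L2: "set ps \<subseteq> V \<Longrightarrow> R \<subseteq> set ps \<Longrightarrow> sep t R \<Longrightarrow> t \<ge> 0
  \<Longrightarrow> (real (card R) - 1) * t \<le> path_weight d ps"
proof (induction ps arbitrary: R)
  case Nil thus ?case by (simp add: pw_nil)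
next
  case (Cons b qs)
  have finR: "finite R" using Cons.prems(2) finite_subset by blast
  show ?case
  proof (cases "qs = []")
    case True
    hence "R \<subseteq> {b}" using Cons.prems by simp
    hence "card R \<le> 1" by (metis card.empty card_mono finite.emptyI finite_insert is_singletonI is_singleton_altdef)
    hence "(real (card R) - 1) * t \<le> 0" using Cons.prems(4) by (simp add: mult_nonpos_nonneg)
    thus ?thesis using True by (simp add: pw_single)
  next
    case False
    have nn: "d b (hd qs) \<ge> 0" using Cons.prems(1) False dnn by (cases qs) auto
    show ?thesis
    proof (cases "b \<in> R")
      case True
      have "real (card (R - {b})) * t \<le> d b (hd qs) + path_weight d qs"
      proof (rule L1)
        show "set qs \<subseteq> V" "qs \<noteq> []" "b \<in> V" "b \<notin> R - {b}" using Cons.prems False by auto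
        show "R - {b} \<subseteq> set qs" using Cons.prems(2) by auto
        show "sep t (insert b (R - {b}))" using Cons.prems(3) True by (simp add: insert_absorb)
      qed
      moreover have "real (card (R - {b})) = real (card R) - 1" using card_minus_real[OF finR True] .
      ultimately show ?thesis using pw_cons[OF False] by simp
    next
      case False
      have "(real (card R) - 1) * t \<le> path_weight d qs"
        using Cons.IH Cons.prems False unfolding sep_def by auto
      thus ?thesis using pw_cons[OF \<open>qs \<noteq> []\<close>] nn by simp
    qed
  qed
qed

end



context L begin

lemma count_aux:
  fixes t :: real and T :: "'a set" and C A :: "'a set set"
  assumes TV: "T \<subseteq> V" and CS: "C \<subseteq> S" and Cw: "\<forall>f\<in>C. w f < t"
    and AK: "A \<subseteq> K" and Aw: "\<forall>e\<in>A. t \<le> w e"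
    and AT: "\<forall>u v. {u, v} \<in> A \<longrightarrow> u \<in> T"
  shows "A' \<subseteq> A \<Longrightarrow> card A' = n \<Longrightarrow> reps T (C \<union> A') R \<Longrightarrow>
     \<exists>R'. reps T C R' \<and> card R' = card R + card A'"
proof (induction n arbitrary: A' R)
  case 0
  have finA: "finite A" using finite_subset[OF subset_trans[OF AK K_sub] finite_S] .
  hence "finite A'" using 0 finite_subset by blast
  hence "A' = {}" using 0 by simp
  thus ?case using 0 by auto
next
  case (Suc k)
  have finA': "finite A'" using finite_subset[OF subset_trans[OF subset_trans[OF Suc.prems(1) AK] K_sub] finite_S] .
  have ne: "A' \<noteq> {}" using Suc.prems(2) by auto
  obtain e where eA: "e \<in> A'" and emax: "\<forall>f\<in>A'. w f \<le> w e"
  proof -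
    have "Max (w ` A') \<in> w ` A'" using finA' ne by (intro Max_in) auto
    then obtain e where "e \<in> A'" "w e = Max (w ` A')" by (metis imageE)
    moreover have "\<forall>f\<in>A'. w f \<le> Max (w ` A')" using finA' by simp
    ultimately show ?thesis using that by simp
  qed
  have eK: "e \<in> K" using eA Suc.prems(1) AK by blast
  hence eS: "e \<in> S" using K_sub by blast
  then obtain u v where uv: "e = {u, v}" "u \<in> V" "v \<in> V" "u \<noteq> v" using S_edge by blast
  have uvA: "{u, v} \<in> A" using eA Suc.prems(1) uv(1) by blast
  hence vuA: "{v, u} \<in> A" by (simp add: insert_commute)
  have uT: "u \<in> T" using AT uvA by blast
  have vT: "v \<in> T" using AT vuA by blast
  define G' where "G' = C \<union> (A' - {e})"
  have G: "C \<union> A' = insert {u, v} G'" using eA uv(1) G'_def by blast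
  have G'lt: "G' \<subseteq> {f\<in>S. w f < w e}"
  proof
    fix f assume f: "f \<in> G'"
    show "f \<in> {f\<in>S. w f < w e}"
    proof (cases "f \<in> C")
      case True
      have "w f < t" using Cw True by blast
      moreover have "t \<le> w e" using Aw eA Suc.prems(1) by blast
      ultimately show ?thesis using True CS by auto
    next
      case False
      hence fA: "f \<in> A'" "f \<noteq> e" using f G'_def by auto
      hence fS: "f \<in> S" using Suc.prems(1) AK K_sub by blast
      have "w f \<noteq> w e" using w_inj[OF fS eS fA(2)] .
      moreover have "w f \<le> w e" using emax fA by blast
      ultimately show ?thesis using fS by auto
    qed
  qed
  have nc: "\<not> connected_in G' u v"
  proof
    assume "connected_in G' u v"
    hence "connected_in {f\<in>S. w f < w e} u v" using conn_mono[OF G'lt] by blast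
    thus False using eK uv(1) unfolding K_def by blast
  qed
  have "R \<subseteq> V" using Suc.prems(3) TV unfolding reps_def by blast
  hence finR: "finite R" using finV finite_subset by blast
  obtain R1 where R1: "reps T G' R1" "card R1 = card R + 1"
    using reps_remove[OF _ uT vT nc finR] Suc.prems(3) G by auto
  have "reps T (C \<union> (A' - {e})) R1" using R1(1) G'_def by simp
  moreover have "A' - {e} \<subseteq> A" using Suc.prems(1) by blast
  moreover have "card (A' - {e}) = k" using Suc.prems(2) eA finA' by simp
  ultimately obtain R' where R': "reps T C R'" "card R' = card R1 + card (A' - {e})"
    using Suc.IH by blast
  have "card R' = card R + card A'" using R'(2) R1(2) Suc.prems(2) \<open>card (A' - {e}) = k\<close> by simp
  thus ?case using R'(1) by blast
qed

lemma count:
  fixes t :: real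
  assumes t: "t > 0" and ne: "{e\<in>K. t \<le> w e} \<noteq> {}"
  shows "\<exists>R\<subseteq>V. card R \<ge> card {e\<in>K. t \<le> w e} + 1 \<and> sep t R"
proof -
  define A where "A = {e\<in>K. t \<le> w e}"
  define T where "T = {x\<in>V. t \<le> r x}"
  define C where "C = {{a, b} | a b. a \<in> T \<and> b \<in> T \<and> a \<noteq> b \<and> d a b < t}"
  have TV: "T \<subseteq> V" unfolding T_def by blast
  have CS: "C \<subseteq> S"
  proof
    fix f assume "f \<in> C"
    then obtain a b where ab: "f = {a, b}" "a \<in> T" "b \<in> T" "a \<noteq> b" "d a b < t" unfolding C_def by blast
    have "a \<in> V" "b \<in> V" "t \<le> r a" "t \<le> r b" using ab unfolding T_def by auto
    thus "f \<in> S" using ab unfolding SDG_def by force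
  qed
  have Cw: "\<forall>f\<in>C. w f < t"
  proof
    fix f assume "f \<in> C"
    then obtain a b where ab: "f = {a, b}" "a \<in> T" "b \<in> T" "d a b < t" unfolding C_def by blast
    have "a \<in> V" "b \<in> V" using ab TV by auto
    thus "w f < t" using ew[of a b] ab by simp
  qed
  have AK: "A \<subseteq> K" unfolding A_def by blast
  have Aw: "\<forall>e\<in>A. t \<le> w e" unfolding A_def by blast
  have AT: "\<And>u v. {u, v} \<in> A \<Longrightarrow> u \<in> T"
  proof -
    fix u v assume uv: "{u, v} \<in> A"
    hence "{u, v} \<in> S" "t \<le> w {u, v}" using AK K_sub Aw by auto
    moreover from this have "u \<in> V" "d u v \<le> r u" "w {u, v} = d u v" using S_mem w_S by auto
    ultimately show "u \<in> T" unfolding T_def by auto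
  qed
  have AT': "\<forall>u v. {u, v} \<in> A \<longrightarrow> u \<in> T" using AT by blast
  have finT: "finite T" using TV finV finite_subset by blast
  have Tne: "T \<noteq> {}"
  proof -
    obtain e where "e \<in> A" using ne A_def by blast
    moreover then obtain u v where "e = {u, v}" using AK K_sub S_edge by blast
    ultimately show ?thesis using AT by blast
  qed
  obtain R0 where R0: "R0 \<subseteq> T" "\<forall>a\<in>R0. \<forall>b\<in>R0. a \<noteq> b \<longrightarrow> \<not> connected_in (C \<union> A) a b"
    "\<forall>x\<in>T. \<exists>a\<in>R0. connected_in (C \<union> A) x a" "R0 \<noteq> {}"
    using exists_reps[OF finT, of "C \<union> A"] Tne by blast
  have "reps T (C \<union> A) R0" using R0 unfolding reps_def by blast
  then obtain R' where R': "reps T C R'" "card R' = card R0 + card A"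
    using count_aux[OF TV CS Cw AK Aw AT' order.refl refl \<open>reps T (C \<union> A) R0\<close>] by blast
  have "finite R0" using R0(1) finT finite_subset by blast
  hence "card R0 \<ge> 1" using R0(4) by (simp add: Suc_leI card_gt_0_iff)
  hence c: "card R' \<ge> card A + 1" using R'(2) by simp
  have RV: "R' \<subseteq> V" using R'(1) TV unfolding reps_def by blast
  have "sep t R'"
    unfolding sep_def
  proof (intro ballI impI)
    fix a b assume ab: "a \<in> R'" "b \<in> R'" "a \<noteq> b"
    show "t \<le> d a b"
    proof (rule ccontr)
      assume "\<not> t \<le> d a b"
      moreover have "a \<in> T" "b \<in> T" using ab R'(1) unfolding reps_def by auto
      ultimately have "{a, b} \<in> C" using ab(3) unfolding C_def by force
      hence "connected_in C a b" by (rule conn_edge)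
      thus False using R'(1) ab unfolding reps_def by blast
    qed
  qed
  thus ?thesis using c RV A_def by blast
qed

end

theorem lemma2:
  fixes V :: "'a set" and d :: "'a \<Rightarrow> 'a \<Rightarrow> real" and r :: "'a \<Rightarrow> real"
    and n :: nat and F :: "'a set set" and H :: "'a list"
  assumes "finite_metric V d"
    and "card V = n"
    and "distinct_distances V d"
    and "\<forall>v\<in>V. r v > 0"
    and "min_spanning_forest V d (SDG V d r) F"
    and "min_ham_path V d H"
  shows "graph_weight d F \<le> log (5/4) (real n) * path_weight d H"
proof -
  interpret L V d r using assms(1,3) by unfold_locales
  define W where "W = path_weight d H"
  have HV: "set H = V" using assms(6) unfolding min_ham_path_def ham_path_def by blast
  have W0: "W \<ge> 0" using pw_nn HV W_def by simp
  have "graph_weight d F \<le> graph_weight d K"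
    using assms(5) K_spanning unfolding min_spanning_forest_def by blast
  have finK: "finite K" using K_sub finite_S finite_subset by blast
  have bnd: "\<forall>s>0. real (card {e\<in>K. s \<le> w e}) * s \<le> W"
  proof (intro allI impI)
    fix s :: real assume s: "s > 0"
    show "real (card {e\<in>K. s \<le> w e}) * s \<le> W"
    proof (cases "{e\<in>K. s \<le> w e} = {}")
      case True
      hence "card {e\<in>K. s \<le> w e} = 0" by (simp only: card.empty)
      thus ?thesis using W0 by simp
    next
      case False
      then obtain R where R: "R \<subseteq> V" "card R \<ge> card {e\<in>K. s \<le> w e} + 1" "sep s R"
        using count[OF s] by blast
      have "(real (card R) - 1) * s \<le> W" using L2[of H R s] HV R s W_def by simp
      moreover have "real (card {e\<in>K. s \<le> w e}) \<le> real (card R) - 1" using R(2) by simp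
      ultimately show ?thesis using s by (smt (verit) mult_right_mono)
    qed
  qed
  have wpos: "\<forall>e\<in>K. w e > 0" using w_pos K_sub by blast
  have sK: "graph_weight d K \<le> W * log (5/4) (real (card K) + 1)"
    unfolding graph_weight_def using sum_bound[OF finK refl wpos bnd] .
  show ?thesis
  proof (cases "K = {}")
    case True
    have "graph_weight d K = 0" using True unfolding graph_weight_def by simp
    moreover have "log (5/4) (real n) * W \<ge> 0"
    proof (cases "n = 0")
      case True
      hence "V = {}" using assms(2) finV by simp
      hence "H = []" using HV by simp
      hence "W = 0" using W_def by (simp add: pw_nil)
      thus ?thesis by simp
    next
      case False
      hence "log (5/4) (real n) \<ge> 0" by simp
      thus ?thesis using W0 by simp
    qed
    ultimately show ?thesis using \<open>graph_weight d F \<le> graph_weight d K\<close> W_def by simp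
  next
    case False
    define s where "s = Min (w ` K)"
    have sin: "s \<in> w ` K" using finK False unfolding s_def by (intro Min_in) auto
    have s0: "s > 0" using sin wpos by auto
    have "{e\<in>K. s \<le> w e} = K" using finK unfolding s_def by auto
    then obtain R where R: "R \<subseteq> V" "card R \<ge> card K + 1"
      using count[OF s0] False by auto
    have "card R \<le> n" using card_mono[OF finV R(1)] assms(2) by simp
    hence cK: "real (card K) + 1 \<le> real n" using R(2) by simp
    have "log (5/4) (real (card K) + 1) \<le> log (5/4) (real n)" using cK by simp
    hence "W * log (5/4) (real (card K) + 1) \<le> W * log (5/4) (real n)"
      using W0 by (intro mult_left_mono)
    thus ?thesis using sK \<open>graph_weight d F \<le> graph_weight d K\<close> W_def by (simp add: mult.commute)
  qed
qed



end
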